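(* For all $M\in\Lambda_R$: if $M\to^* M_1$ and $M\to^* M_2$, then there is $M_3\in\Lambda_R$ such that $M_1\to^* M_3$ and $M_2\to^* M_3$.
   Context: $\Lambda_R\ni M,N ::= x\mid\lambda x.M\mid MN\mid M.l\mid R\mid M\oplus R$, with records $R ::= \langle l_i=M_i\mid i\in I\rangle$ ($I$ finite, labels pairwise distinct), $x$ ranging over variables and $l$ over labels; terms are identified up to renaming of bound variables. Reduction $\to$ is the least compatible relation (closed under all term constructors) containing $(\lambda x.M)N\to M[N/x]$ (capture-avoiding substitution); $\langle l_i=M_i\mid i\in I\rangle.l_j\to M_j$ if $j\in I$; $\langle l_i=M_i\mid i\in I\rangle\oplus\langle l_j=N_j\mid j\in J\rangle\to\langle l_i=M_i,\ l_j=N_j\mid i\in I\setminus J,\ j\in J\rangle$. $\to^*$ is the reflexive transitive closure of $\to$. *)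

theory Defs
  imports Main "HOL-Library.Finite_Map"
begin

text \<open>Bound variables are
represented by de Bruijn indices (terms up to alpha-equivalence). A record
<l_i = M_i | i in I> (I finite, labels pairwise distinct) is a finite map
from labels to terms. The second argument of Ext (record extension M (+) R)
is syntactically a record.\<close>

datatype 'l trm =
    Var nat
  | Lam "'l trm"
  | App "'l trm" "'l trm"
  | Sel "'l trm" 'l
  | Rcd "('l, 'l trm) fmap"
  | Ext "'l trm" "('l, 'l trm) fmap"

primrec lift :: "'l trm \<Rightarrow> nat \<Rightarrow> 'l trm" where
  "lift (Var i) k = (if i < k then Var i else Var (Suc i))"
| "lift (Lam t) k = Lam (lift t (Suc k))"
| "lift (App s t) k = App (lift s k) (lift t k)"
| "lift (Sel t l) k = Sel (lift t k) l"
| "lift (Rcd r) k = Rcd (fmmap (\<lambda>t. lift t k) r)"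
| "lift (Ext t r) k = Ext (lift t k) (fmmap (\<lambda>t. lift t k) r)"

text \<open>subst t k s: capture-avoiding substitution of s for index k in t,
decrementing the free indices above k (the binder is removed).\<close>
primrec subst :: "'l trm \<Rightarrow> nat \<Rightarrow> 'l trm \<Rightarrow> 'l trm" where
  "subst (Var i) k s = (if k < i then Var (i - 1) else if i = k then s else Var i)"
| "subst (Lam t) k s = Lam (subst t (Suc k) (lift s 0))"
| "subst (App t u) k s = App (subst t k s) (subst u k s)"
| "subst (Sel t l) k s = Sel (subst t k s) l"
| "subst (Rcd r) k s = Rcd (fmmap (\<lambda>t. subst t k s) r)"
| "subst (Ext t r) k s = Ext (subst t k s) (fmmap (\<lambda>t. subst t k s) r)"

text \<open>One-step reduction: the least compatible relation containing beta,
record selection and record extension (right record overrides).\<close>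
inductive red :: "'l trm \<Rightarrow> 'l trm \<Rightarrow> bool" (infixl \<open>\<rightarrow>\<^sub>R\<close> 50) where
  beta: "App (Lam M) N \<rightarrow>\<^sub>R subst M 0 N"
| sel: "fmlookup r l = Some M \<Longrightarrow> Sel (Rcd r) l \<rightarrow>\<^sub>R M"
| ext: "Ext (Rcd r1) r2 \<rightarrow>\<^sub>R Rcd (r1 ++\<^sub>f r2)"
| lam: "M \<rightarrow>\<^sub>R M' \<Longrightarrow> Lam M \<rightarrow>\<^sub>R Lam M'"
| appL: "M \<rightarrow>\<^sub>R M' \<Longrightarrow> App M N \<rightarrow>\<^sub>R App M' N"
| appR: "N \<rightarrow>\<^sub>R N' \<Longrightarrow> App M N \<rightarrow>\<^sub>R App M N'"
| selC: "M \<rightarrow>\<^sub>R M' \<Longrightarrow> Sel M l \<rightarrow>\<^sub>R Sel M' l"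
| rcd: "fmlookup r l = Some M \<Longrightarrow> M \<rightarrow>\<^sub>R M' \<Longrightarrow> Rcd r \<rightarrow>\<^sub>R Rcd (fmupd l M' r)"
| extL: "M \<rightarrow>\<^sub>R M' \<Longrightarrow> Ext M r \<rightarrow>\<^sub>R Ext M' r"
| extR: "fmlookup r l = Some N \<Longrightarrow> N \<rightarrow>\<^sub>R N' \<Longrightarrow> Ext M r \<rightarrow>\<^sub>R Ext M (fmupd l N' r)"

abbreviation reds :: "'l trm \<Rightarrow> 'l trm \<Rightarrow> bool" (infixl \<open>\<rightarrow>\<^sub>R\<^sup>*\<close> 50) where
  "M \<rightarrow>\<^sub>R\<^sup>* N \<equiv> red\<^sup>*\<^sup>* M N"

end

theory Submission
  imports Defs
begin


lemma lift_lift: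
  "i < k + 1 \<Longrightarrow> lift (lift t i) (Suc k) = lift (lift t k) i"
  by (induction t arbitrary: i k) (auto simp: fmap.map_comp intro!: fmap.map_cong)

lemma lift_subst [simp]:
  "j < i + 1 \<Longrightarrow> lift (subst t j s) i = subst (lift t (i + 1)) j (lift s i)"
  by (induction t arbitrary: i j s) (auto simp: fmap.map_comp lift_lift intro!: fmap.map_cong)

lemma lift_subst_lt:
  "i < j + 1 \<Longrightarrow> lift (subst t j s) i = subst (lift t i) (j + 1) (lift s i)"
  by (induction t arbitrary: i j s) (auto simp: fmap.map_comp lift_lift intro!: fmap.map_cong)

lemma subst_lift [simp]:
  "subst (lift t k) k s = t"
  by (induction t arbitrary: k s) (auto simp: fmap.map_comp intro!: fmap.map_ident_strong)

lemma subst_subst: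
  "i < j + 1 \<Longrightarrow> subst (subst t (Suc j) (lift v i)) i (subst u j v) = subst (subst t i u) j v"
  by (induction t arbitrary: i j u v)
    (auto simp: fmap.map_comp lift_lift [symmetric] lift_subst_lt intro!: fmap.map_cong)



inductive par :: "'l trm \<Rightarrow> 'l trm \<Rightarrow> bool" where
  pvar: "par (Var i) (Var i)"
| plam: "par M M' \<Longrightarrow> par (Lam M) (Lam M')"
| papp: "par M M' \<Longrightarrow> par N N' \<Longrightarrow> par (App M N) (App M' N')"
| pbeta: "par M M' \<Longrightarrow> par N N' \<Longrightarrow> par (App (Lam M) N) (subst M' 0 N')"
| psel: "par M M' \<Longrightarrow> par (Sel M l) (Sel M' l)"
| pselr: "fmrel par r r' \<Longrightarrow> fmlookup r' l = Some M' \<Longrightarrow> par (Sel (Rcd r) l) M'"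
| prcd: "fmrel par r r' \<Longrightarrow> par (Rcd r) (Rcd r')"
| pext: "par M M' \<Longrightarrow> fmrel par r r' \<Longrightarrow> par (Ext M r) (Ext M' r')"
| pextr: "fmrel par r1 r1' \<Longrightarrow> fmrel par r2 r2' \<Longrightarrow> par (Ext (Rcd r1) r2) (Rcd (r1' ++\<^sub>f r2'))"
monos fmap.rel_mono

lemma par_refl: "par t t"
proof (induction t)
  case (Rcd x) then show ?case by (auto intro!: prcd fmap.rel_refl_strong)
next
  case (Ext t x) then show ?case by (auto intro!: pext fmap.rel_refl_strong)
qed (auto intro: par.intros)

lemma fmrel_map: "fmrel (\<lambda>x y. P x y \<and> Q (f x) (g y)) r r' \<Longrightarrow> fmrel Q (fmmap f r) (fmmap g r')"
  unfolding fmrel_iff by (auto simp: option.rel_map elim!: option.rel_mono_strong)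

lemma par_lift: "par M M' \<Longrightarrow> par (lift M k) (lift M' k)"
proof (induction arbitrary: k rule: par.induct)
  case (pbeta M M' N N')
  then show ?case by (auto simp: lift_subst_lt[of 0 0, simplified] intro: par.pbeta)
next
  case (pselr r r' l M')
  then show ?case
  proof -
    have "fmrel par (fmmap (\<lambda>t. lift t k) r) (fmmap (\<lambda>t. lift t k) r')"
      by (rule fmrel_map, rule fmap.rel_mono_strong[OF pselr.IH]) auto
    then show ?thesis using pselr(2) by (auto intro!: par.pselr)
  qed
next
  case (prcd r r')
  have "fmrel par (fmmap (\<lambda>t. lift t k) r) (fmmap (\<lambda>t. lift t k) r')"
    by (rule fmrel_map, rule fmap.rel_mono_strong[OF prcd.IH]) auto
  then show ?case by (auto intro!: par.prcd)
next
  case (pext M M' r r')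
  have "fmrel par (fmmap (\<lambda>t. lift t k) r) (fmmap (\<lambda>t. lift t k) r')"
    by (rule fmrel_map, rule fmap.rel_mono_strong[OF pext.IH(2)]) auto
  then show ?case using pext by (auto intro!: par.pext)
next
  case (pextr r1 r1' r2 r2')
  have "fmrel par (fmmap (\<lambda>t. lift t k) r1) (fmmap (\<lambda>t. lift t k) r1')"
    by (rule fmrel_map, rule fmap.rel_mono_strong[OF pextr.IH(1)]) auto
  moreover have "fmrel par (fmmap (\<lambda>t. lift t k) r2) (fmmap (\<lambda>t. lift t k) r2')"
    by (rule fmrel_map, rule fmap.rel_mono_strong[OF pextr.IH(2)]) auto
  ultimately show ?case by (auto intro!: par.pextr)
qed (auto intro: par.intros)



lemma par_subst: "par M M' \<Longrightarrow> par N N' \<Longrightarrow> par (subst M k N) (subst M' k N')"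
proof (induction arbitrary: k N N' rule: par.induct)
  case (pvar i) then show ?case by (auto intro: par.intros)
next
  case (plam M M') then show ?case by (auto intro!: par.plam par_lift)
next
  case (papp M M' P P') then show ?case by (auto intro!: par.papp)
next
  case (pbeta M M' P P')
  have "par (App (Lam (subst M (Suc k) (lift N 0))) (subst P k N))
            (subst (subst M' (Suc k) (lift N' 0)) 0 (subst P' k N'))"
    using pbeta by (auto intro!: par.pbeta par_lift)
  then show ?case using subst_subst[of 0 k M' N' P'] by simp
next
  case (psel M M' l) then show ?case by (auto intro!: par.psel)
next
  case (pselr r r' l M')
  have "fmrel par (fmmap (\<lambda>t. subst t k N) r) (fmmap (\<lambda>t. subst t k N') r')"
    by (rule fmrel_map, rule fmap.rel_mono_strong[OF pselr.IH]) (auto simp: pselr.prems)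
  then show ?case using pselr(2) by (auto intro!: par.pselr)
next
  case (prcd r r')
  have "fmrel par (fmmap (\<lambda>t. subst t k N) r) (fmmap (\<lambda>t. subst t k N') r')"
    by (rule fmrel_map, rule fmap.rel_mono_strong[OF prcd.IH]) (auto simp: prcd.prems)
  then show ?case by (auto intro!: par.prcd)
next
  case (pext M M' r r')
  have "fmrel par (fmmap (\<lambda>t. subst t k N) r) (fmmap (\<lambda>t. subst t k N') r')"
    by (rule fmrel_map, rule fmap.rel_mono_strong[OF pext.IH(2)]) (auto simp: pext.prems)
  then show ?case using pext by (auto intro!: par.pext)
next
  case (pextr r1 r1' r2 r2')
  have "fmrel par (fmmap (\<lambda>t. subst t k N) r1) (fmmap (\<lambda>t. subst t k N') r1')"
    by (rule fmrel_map, rule fmap.rel_mono_strong[OF pextr.IH(1)]) (auto simp: pextr.prems)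
  moreover have "fmrel par (fmmap (\<lambda>t. subst t k N) r2) (fmmap (\<lambda>t. subst t k N') r2')"
    by (rule fmrel_map, rule fmap.rel_mono_strong[OF pextr.IH(2)]) (auto simp: pextr.prems)
  ultimately show ?case by (auto intro!: par.pextr)
qed

lemma fmrel_join:
  assumes "fmrel (\<lambda>x y. P x y \<and> (\<forall>z. P x z \<longrightarrow> (\<exists>w. P y w \<and> P z w))) r r1"
    and "fmrel P r r2"
  shows "\<exists>r3. fmrel P r1 r3 \<and> fmrel P r2 r3"
proof -
  define g where "g l = (SOME w. P (the (fmlookup r1 l)) w \<and> P (the (fmlookup r2 l)) w)" for l
  have "fmrel P r1 (fmmap_keys (\<lambda>l _. g l) r1) \<and> fmrel P r2 (fmmap_keys (\<lambda>l _. g l) r1)"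
  proof (intro conjI fmrelI)
    fix l
    have "rel_option P (fmlookup r1 l) (fmlookup (fmmap_keys (\<lambda>l _. g l) r1) l) \<and>
          rel_option P (fmlookup r2 l) (fmlookup (fmmap_keys (\<lambda>l _. g l) r1) l)"
    proof (cases "fmlookup r l")
      case None
      then show ?thesis using fmrelD[OF assms(2), of l] fmrelD[OF assms(1), of l] by (auto simp: option.rel_sel)
    next
      case (Some a)
      then obtain b where some: "fmlookup r1 l = Some b" "\<forall>z. P a z \<longrightarrow> (\<exists>w. P b w \<and> P z w)"
        using fmrelD[OF assms(1), of l] by (cases "fmlookup r1 l") auto
      obtain c where c: "fmlookup r2 l = Some c" "P a c"
        using fmrelD[OF assms(2), of l] Some by (cases "fmlookup r2 l") auto
      with some have ex: "\<exists>w. P b w \<and> P c w" by blast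
      have "P b (g l) \<and> P c (g l)" unfolding g_def using some c someI_ex[OF ex] by simp
      then show ?thesis using some c by auto
    qed
    then show "rel_option P (fmlookup r1 l) (fmlookup (fmmap_keys (\<lambda>l _. g l) r1) l)"
      and "rel_option P (fmlookup r2 l) (fmlookup (fmmap_keys (\<lambda>l _. g l) r1) l)" by auto
  qed
  then show ?thesis by blast
qed

lemma par_Lam_inv: "par (Lam M) N \<Longrightarrow> \<exists>M'. N = Lam M' \<and> par M M'"
  by (erule par.cases) auto

lemma par_Rcd_inv: "par (Rcd r) N \<Longrightarrow> \<exists>r'. N = Rcd r' \<and> fmrel par r r'"
  by (erule par.cases) auto



lemma par_diamond: "par M M1 \<Longrightarrow> par M M2 \<Longrightarrow> \<exists>M3. par M1 M3 \<and> par M2 M3"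
proof (induction arbitrary: M2 rule: par.induct)
  case (pvar i) then show ?case by (auto elim: par.cases intro: par.intros)
next
  case (plam M M')
  from plam.prems obtain P where "M2 = Lam P" "par M P" by (auto dest: par_Lam_inv)
  with plam.IH show ?case by (blast intro: par.plam)
next
  case (papp M M' N N')
  from papp.prems show ?case
  proof cases
    case (papp P' Q')
    with papp.IH show ?thesis by (blast intro: par.papp)
  next
    case (pbeta P P' Q')
    from papp.hyps(1) \<open>M = Lam P\<close> obtain P1 where "M' = Lam P1" "par P P1" by (auto dest: par_Lam_inv)
    from papp.IH(1)[of "Lam P'"] pbeta obtain M3 where "par M' M3" "par (Lam P') M3" by (auto intro: par.plam)
    with \<open>M' = Lam P1\<close> obtain P3 where "M3 = Lam P3" "par P1 P3" "par P' P3" by (auto dest!: par_Lam_inv)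
    from papp.IH(2) pbeta obtain N3 where "par N' N3" "par Q' N3" by blast
    show ?thesis using pbeta \<open>M' = Lam P1\<close> \<open>par P1 P3\<close> \<open>par P' P3\<close> \<open>par N' N3\<close> \<open>par Q' N3\<close>
      by (auto intro!: exI[of _ "subst P3 0 N3"] par.pbeta par_subst)
  qed
next
  case (pbeta M M' N N')
  from pbeta.prems show ?case
  proof cases
    case (papp P' Q')
    from \<open>par (Lam M) P'\<close> obtain P1 where "P' = Lam P1" "par M P1" by (auto dest: par_Lam_inv)
    from pbeta.IH(1) \<open>par M P1\<close> obtain P3 where "par M' P3" "par P1 P3" by blast
    from pbeta.IH(2) papp obtain N3 where "par N' N3" "par Q' N3" by blast
    show ?thesis using papp \<open>P' = Lam P1\<close> \<open>par P1 P3\<close> \<open>par M' P3\<close> \<open>par N' N3\<close> \<open>par Q' N3\<close>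
      by (auto intro!: exI[of _ "subst P3 0 N3"] par.pbeta par_subst)
  next
    case (pbeta P' Q')
    from pbeta.IH(1) \<open>par M P'\<close> obtain P3 where "par M' P3" "par P' P3" by blast
    from pbeta.IH(2) \<open>par N Q'\<close> obtain N3 where "par N' N3" "par Q' N3" by blast
    show ?thesis using pbeta \<open>par P' P3\<close> \<open>par M' P3\<close> \<open>par N' N3\<close> \<open>par Q' N3\<close>
      by (auto intro!: exI[of _ "subst P3 0 N3"] par_subst)
  qed
next
  case (psel M M' l)
  from psel.prems show ?case
  proof cases
    case (psel P)
    with psel.IH show ?thesis by (blast intro: par.psel)
  next
    case (pselr r r2)
    from psel.hyps \<open>M = Rcd r\<close> obtain r1 where "M' = Rcd r1" "fmrel par r r1" by (auto dest: par_Rcd_inv)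
    from psel.IH[of "Rcd r2"] pselr obtain M3 where "par M' M3" "par (Rcd r2) M3" by (auto intro: par.prcd)
    with \<open>M' = Rcd r1\<close> obtain r3 where "M3 = Rcd r3" "fmrel par r1 r3" "fmrel par r2 r3" by (auto dest!: par_Rcd_inv)
    from fmrelD[OF \<open>fmrel par r2 r3\<close>, of l] pselr obtain v where "fmlookup r3 l = Some v" "par M2 v"
      by (cases "fmlookup r3 l") auto
    then show ?thesis using \<open>M' = Rcd r1\<close> \<open>fmrel par r1 r3\<close> by (auto intro: par.pselr)
  qed
next
  case (pselr r r1 l M1)
  from pselr.prems show ?case
  proof cases
    case (psel P)
    then obtain r2 where "P = Rcd r2" "fmrel par r r2" by (auto dest: par_Rcd_inv)
    from fmrel_join[OF pselr.IH this(2)] obtain r3 where "fmrel par r1 r3" "fmrel par r2 r3" by blast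
    from fmrelD[OF \<open>fmrel par r1 r3\<close>, of l] pselr obtain v where "fmlookup r3 l = Some v" "par M1 v"
      by (cases "fmlookup r3 l") auto
    then show ?thesis using psel \<open>P = Rcd r2\<close> \<open>fmrel par r2 r3\<close> by (auto intro: par.pselr par.psel)
  next
    case (pselr r2)
    from fmrel_join[OF pselr.IH \<open>fmrel par r r2\<close>] obtain r3 where "fmrel par r1 r3" "fmrel par r2 r3" by blast
    from fmrelD[OF \<open>fmrel par r1 r3\<close>, of l] \<open>fmlookup r1 l = Some M1\<close> obtain v where "fmlookup r3 l = Some v" "par M1 v"
      by (cases "fmlookup r3 l") auto
    moreover from fmrelD[OF \<open>fmrel par r2 r3\<close>, of l] pselr obtain v' where "fmlookup r3 l = Some v'" "par M2 v'"
      by (cases "fmlookup r3 l") auto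
    ultimately show ?thesis by auto
  qed
next
  case (prcd r r1)
  from prcd.prems obtain r2 where "M2 = Rcd r2" "fmrel par r r2" by (auto dest: par_Rcd_inv)
  from fmrel_join[OF prcd.IH this(2)] obtain r3 where "fmrel par r1 r3" "fmrel par r2 r3" by blast
  then show ?case using \<open>M2 = Rcd r2\<close> by (auto intro: par.prcd)
next
  case (pext M M' r r1)
  from pext.prems show ?case
  proof cases
    case (pext P r2)
    from fmrel_join[OF pext.IH(2) \<open>fmrel par r r2\<close>] obtain r3 where "fmrel par r1 r3" "fmrel par r2 r3" by blast
    moreover from pext.IH(1) pext obtain M3 where "par M' M3" "par P M3" by blast
    ultimately show ?thesis using pext by (auto intro: par.pext)
  next
    case (pextr q q2 r2)
    from pext.hyps(1) \<open>M = Rcd q\<close> obtain q1 where "M' = Rcd q1" "fmrel par q q1" by (auto dest: par_Rcd_inv)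
    from pext.IH(1)[of "Rcd q2"] pextr obtain M3 where "par M' M3" "par (Rcd q2) M3" by (auto intro: par.prcd)
    with \<open>M' = Rcd q1\<close> obtain q3 where "M3 = Rcd q3" "fmrel par q1 q3" "fmrel par q2 q3" by (auto dest!: par_Rcd_inv)
    from fmrel_join[OF pext.IH(2) \<open>fmrel par r r2\<close>] obtain r3 where "fmrel par r1 r3" "fmrel par r2 r3" by blast
    show ?thesis using pextr \<open>M' = Rcd q1\<close> \<open>fmrel par q1 q3\<close> \<open>fmrel par q2 q3\<close> \<open>fmrel par r1 r3\<close> \<open>fmrel par r2 r3\<close>
      by (auto intro!: exI[of _ "Rcd (q3 ++\<^sub>f r3)"] par.pextr par.prcd)
  qed
next
  case (pextr q q1 r r1)
  from pextr.prems show ?case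
  proof cases
    case (pext P r2)
    then obtain q2 where "P = Rcd q2" "fmrel par q q2" by (auto dest: par_Rcd_inv)
    from fmrel_join[OF pextr.IH(1) this(2)] obtain q3 where "fmrel par q1 q3" "fmrel par q2 q3" by blast
    from fmrel_join[OF pextr.IH(2) \<open>fmrel par r r2\<close>] obtain r3 where "fmrel par r1 r3" "fmrel par r2 r3" by blast
    show ?thesis using pext \<open>P = Rcd q2\<close> \<open>fmrel par q1 q3\<close> \<open>fmrel par q2 q3\<close> \<open>fmrel par r1 r3\<close> \<open>fmrel par r2 r3\<close>
      by (auto intro!: exI[of _ "Rcd (q3 ++\<^sub>f r3)"] par.pextr par.prcd)
  next
    case (pextr q2 r2)
    from fmrel_join[OF pextr.IH(1) \<open>fmrel par q q2\<close>] obtain q3 where "fmrel par q1 q3" "fmrel par q2 q3" by blast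
    from fmrel_join[OF pextr.IH(2) \<open>fmrel par r r2\<close>] obtain r3 where "fmrel par r1 r3" "fmrel par r2 r3" by blast
    show ?thesis using pextr \<open>fmrel par q1 q3\<close> \<open>fmrel par q2 q3\<close> \<open>fmrel par r1 r3\<close> \<open>fmrel par r2 r3\<close>
      by (auto intro!: exI[of _ "Rcd (q3 ++\<^sub>f r3)"] par.prcd)
  qed
qed



lemma red_par: "M \<rightarrow>\<^sub>R N \<Longrightarrow> par M N"
proof (induction rule: red.induct)
  case (beta M N) then show ?case by (auto intro: par.pbeta par_refl)
next
  case (sel r l M) then show ?case by (auto intro!: par.pselr fmap.rel_refl_strong par_refl)
next
  case (ext r1 r2) then show ?case by (auto intro!: par.pextr fmap.rel_refl_strong par_refl)
next
  case (rcd r l M M')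
  have "fmrel par r (fmupd l M' r)"
    using rcd by (auto simp: fmrel_iff option.rel_sel par_refl)
  then show ?case by (auto intro: par.prcd)
next
  case (extR r l N N' M)
  have "fmrel par r (fmupd l N' r)"
    using extR by (auto simp: fmrel_iff option.rel_sel par_refl)
  then show ?case by (auto intro: par.pext par_refl)
qed (auto intro: par.intros par_refl fmap.rel_refl_strong)

lemma reds_single:
  assumes st: "\<And>r l M M'. fmlookup r l = Some M \<Longrightarrow> M \<rightarrow>\<^sub>R M' \<Longrightarrow> C r \<rightarrow>\<^sub>R C (fmupd l M' r)"
  shows "M \<rightarrow>\<^sub>R\<^sup>* M' \<Longrightarrow> fmlookup r l = Some M \<Longrightarrow> C r \<rightarrow>\<^sub>R\<^sup>* C (fmupd l M' r)"
proof (induction M' rule: rtranclp_induct)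
  case base
  have "fmupd l M r = r" by (rule fmap_ext) (use base in auto)
  then show ?case by simp
next
  case (step y z)
  have "C (fmupd l y r) \<rightarrow>\<^sub>R C (fmupd l z (fmupd l y r))"
    using st[of "fmupd l y r" l y z] step by simp
  then show ?case using step by (auto intro: rtranclp.rtrancl_into_rtrancl)
qed

lemma reds_rec:
  assumes step: "\<And>r l M M'. fmlookup r l = Some M \<Longrightarrow> M \<rightarrow>\<^sub>R M' \<Longrightarrow> C r \<rightarrow>\<^sub>R C (fmupd l M' r)"
    and rel: "fmrel (\<lambda>x y. x \<rightarrow>\<^sub>R\<^sup>* y) r r'"
  shows "C r \<rightarrow>\<^sub>R\<^sup>* C r'"
proof -
  have gen: "\<forall>r. fmrel (\<lambda>x y. x \<rightarrow>\<^sub>R\<^sup>* y) r r' \<longrightarrow> (\<forall>l. l \<notin> S \<longrightarrow> fmlookup r l = fmlookup r' l)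
          \<longrightarrow> C r \<rightarrow>\<^sub>R\<^sup>* C r'" if "finite S" for S
    using that
  proof (induction S rule: finite_induct)
    case empty
    show ?case
    proof (intro allI impI)
      fix r assume "\<forall>l. l \<notin> {} \<longrightarrow> fmlookup r l = fmlookup r' l"
      then have "r = r'" by (intro fmap_ext) auto
      then show "C r \<rightarrow>\<^sub>R\<^sup>* C r'" by simp
    qed
  next
    case (insert x S)
    show ?case
    proof (intro allI impI)
      fix r
      assume R: "fmrel (\<lambda>x y. x \<rightarrow>\<^sub>R\<^sup>* y) r r'" and A: "\<forall>l. l \<notin> insert x S \<longrightarrow> fmlookup r l = fmlookup r' l"
      show "C r \<rightarrow>\<^sub>R\<^sup>* C r'"
      proof (cases "fmlookup r' x")
        case None
        with fmrelD[OF R, of x] have "fmlookup r x = None" by (cases "fmlookup r x") auto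
        with None A have "\<forall>l. l \<notin> S \<longrightarrow> fmlookup r l = fmlookup r' l" by (metis insertE)
        with insert.IH R show ?thesis by blast
      next
        case (Some v)
        with fmrelD[OF R, of x] obtain u where u: "fmlookup r x = Some u" "u \<rightarrow>\<^sub>R\<^sup>* v"
          by (cases "fmlookup r x") auto
        have 1: "C r \<rightarrow>\<^sub>R\<^sup>* C (fmupd x v r)"
          by (rule reds_single[OF step u(2) u(1)])
        have 2: "fmrel (\<lambda>x y. x \<rightarrow>\<^sub>R\<^sup>* y) (fmupd x v r) r'"
          using R Some unfolding fmrel_iff by (auto simp: option.rel_sel)
        have 3: "\<forall>l. l \<notin> S \<longrightarrow> fmlookup (fmupd x v r) l = fmlookup r' l"
          using A Some by auto
        from 1 insert.IH 2 3 show ?thesis by (blast intro: rtranclp_trans)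
      qed
    qed
  qed
  have agree: "\<forall>l. l \<notin> fset (fmdom r') \<longrightarrow> fmlookup r l = fmlookup r' l"
  proof (intro allI impI)
    fix l assume "l \<notin> fset (fmdom r')"
    then have "fmlookup r' l = None" by (simp add: fmdom_notD)
    with fmrelD[OF rel, of l] show "fmlookup r l = fmlookup r' l" by (cases "fmlookup r l") auto
  qed
  have "finite (fset (fmdom r'))" by simp
  from gen[OF this, rule_format, OF rel] agree show ?thesis by blast
qed

lemma reds_Lam: "M \<rightarrow>\<^sub>R\<^sup>* M' \<Longrightarrow> Lam M \<rightarrow>\<^sub>R\<^sup>* Lam M'"
  by (induction rule: rtranclp_induct) (auto intro: rtranclp.rtrancl_into_rtrancl red.lam)
lemma reds_AppL: "M \<rightarrow>\<^sub>R\<^sup>* M' \<Longrightarrow> App M N \<rightarrow>\<^sub>R\<^sup>* App M' N"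
  by (induction rule: rtranclp_induct) (auto intro: rtranclp.rtrancl_into_rtrancl red.appL)
lemma reds_AppR: "N \<rightarrow>\<^sub>R\<^sup>* N' \<Longrightarrow> App M N \<rightarrow>\<^sub>R\<^sup>* App M N'"
  by (induction rule: rtranclp_induct) (auto intro: rtranclp.rtrancl_into_rtrancl red.appR)
lemma reds_Sel: "M \<rightarrow>\<^sub>R\<^sup>* M' \<Longrightarrow> Sel M l \<rightarrow>\<^sub>R\<^sup>* Sel M' l"
  by (induction rule: rtranclp_induct) (auto intro: rtranclp.rtrancl_into_rtrancl red.selC)
lemma reds_ExtL: "M \<rightarrow>\<^sub>R\<^sup>* M' \<Longrightarrow> Ext M r \<rightarrow>\<^sub>R\<^sup>* Ext M' r"
  by (induction rule: rtranclp_induct) (auto intro: rtranclp.rtrancl_into_rtrancl red.extL)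
lemma reds_Rcd: "fmrel (\<lambda>x y. x \<rightarrow>\<^sub>R\<^sup>* y) r r' \<Longrightarrow> Rcd r \<rightarrow>\<^sub>R\<^sup>* Rcd r'"
  by (rule reds_rec[where C = Rcd]) (auto intro: red.rcd)
lemma reds_ExtR: "fmrel (\<lambda>x y. x \<rightarrow>\<^sub>R\<^sup>* y) r r' \<Longrightarrow> Ext M r \<rightarrow>\<^sub>R\<^sup>* Ext M r'"
  by (rule reds_rec[where C = "Ext M"]) (auto intro: red.extR)

lemma par_reds: "par M N \<Longrightarrow> M \<rightarrow>\<^sub>R\<^sup>* N"
proof (induction rule: par.induct)
  case (pvar i) then show ?case by simp
next
  case (plam M M') then show ?case by (blast intro: reds_Lam)
next
  case (papp M M' N N') then show ?case by (meson reds_AppL reds_AppR rtranclp_trans)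
next
  case (pbeta M M' N N')
  have "App (Lam M) N \<rightarrow>\<^sub>R\<^sup>* App (Lam M') N'"
    using pbeta by (meson reds_AppL reds_AppR reds_Lam rtranclp_trans)
  then show ?case by (meson red.beta rtranclp.rtrancl_into_rtrancl)
next
  case (psel M M' l) then show ?case by (blast intro: reds_Sel)
next
  case (pselr r r' l M')
  have "fmrel (\<lambda>x y. x \<rightarrow>\<^sub>R\<^sup>* y) r r'" using pselr.IH by (rule fmap.rel_mono_strong) auto
  then have "Sel (Rcd r) l \<rightarrow>\<^sub>R\<^sup>* Sel (Rcd r') l" by (intro reds_Sel reds_Rcd)
  then show ?case using pselr(2) by (meson red.sel rtranclp.rtrancl_into_rtrancl)
next
  case (prcd r r')
  have "fmrel (\<lambda>x y. x \<rightarrow>\<^sub>R\<^sup>* y) r r'" using prcd.IH by (rule fmap.rel_mono_strong) auto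
  then show ?case by (rule reds_Rcd)
next
  case (pext M M' r r')
  have "fmrel (\<lambda>x y. x \<rightarrow>\<^sub>R\<^sup>* y) r r'" using pext.IH(2) by (rule fmap.rel_mono_strong) auto
  then show ?case using pext.IH(1) by (meson reds_ExtL reds_ExtR rtranclp_trans)
next
  case (pextr r1 r1' r2 r2')
  have a: "fmrel (\<lambda>x y. x \<rightarrow>\<^sub>R\<^sup>* y) r1 r1'" using pextr.IH(1) by (rule fmap.rel_mono_strong) auto
  have b: "fmrel (\<lambda>x y. x \<rightarrow>\<^sub>R\<^sup>* y) r2 r2'" using pextr.IH(2) by (rule fmap.rel_mono_strong) auto
  have "Ext (Rcd r1) r2 \<rightarrow>\<^sub>R\<^sup>* Ext (Rcd r1') r2'"
    using reds_ExtL[OF reds_Rcd[OF a]] reds_ExtR[OF b] by (meson rtranclp_trans)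
  then show ?case by (meson red.ext rtranclp.rtrancl_into_rtrancl)
qed

lemma par_strip: "par M M1 \<Longrightarrow> M \<rightarrow>\<^sub>R\<^sup>* M2 \<Longrightarrow> \<exists>M3. M1 \<rightarrow>\<^sub>R\<^sup>* M3 \<and> par M2 M3"
proof -
  assume "M \<rightarrow>\<^sub>R\<^sup>* M2" "par M M1"
  then show ?thesis
  proof (induction arbitrary: M1 rule: rtranclp_induct)
    case base then show ?case by (blast intro: par_refl)
  next
    case (step y z)
    then obtain M3 where "M1 \<rightarrow>\<^sub>R\<^sup>* M3" "par y M3" by blast
    with par_diamond[OF red_par[OF step(2)] this(2)] obtain M4 where "par z M4" "par M3 M4" by blast
    with \<open>M1 \<rightarrow>\<^sub>R\<^sup>* M3\<close> show ?case by (meson par_reds rtranclp_trans)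
  qed
qed

theorem theorem3p2:
  fixes M M1 M2 :: "'l trm"
  assumes "M \<rightarrow>\<^sub>R\<^sup>* M1" and "M \<rightarrow>\<^sub>R\<^sup>* M2"
  shows "\<exists>M3. M1 \<rightarrow>\<^sub>R\<^sup>* M3 \<and> M2 \<rightarrow>\<^sub>R\<^sup>* M3"
  using assms(1)
proof (induction M1 rule: rtranclp_induct)
  case base then show ?case using assms(2) by blast
next
  case (step y z)
  then obtain M3 where "y \<rightarrow>\<^sub>R\<^sup>* M3" "M2 \<rightarrow>\<^sub>R\<^sup>* M3" by blast
  from par_strip[OF red_par[OF step(2)] this(1)] obtain M4 where "z \<rightarrow>\<^sub>R\<^sup>* M4" "par M3 M4" by blast
  with \<open>M2 \<rightarrow>\<^sub>R\<^sup>* M3\<close> show ?case by (meson par_reds rtranclp_trans)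
qed


end
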